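(* Let $A$ be a finite alphabet of size $m$, and let $w=\mu^{\omega}(a)$ where $a\in A$ and $\mu$ is an $r$-uniform morphism ($r\ge2$) prolongable on $a$; suppose $w$ is aperiodic and uniformly recurrent. Let $t$ be a substring of $w$ such that every length-2 substring of $w$ is a substring of $t$, and let $s$ be a substring of $w$ of the form $s=ftg$ with letters $f,g\in A$. Fix a nonnegative integer $n$ and suppose that $\mu^n(s)$ is a substring of $w$, say $\mu^n(s)=w_{[\gamma,\gamma+|s|\cdot r^n]}$ for some $\gamma$. If $i$ is the remainder of $\gamma$ upon division by $r^n$, then $\gcd(i,r^n)>\frac{r^n}{m^2}$.
   Context: Words are $0$-indexed, and for a word $v$, $v_{[i,j]}$ denotes the substring of $v$ consisting of the letters at indices $i,i+1,\dots,j-1$. A morphism $\mu$ satisfies $\mu(uv)=\mu(u)\mu(v)$ for finite $u$; it is $r$-uniform if $|\mu(b)|=r$ for all $b\in A$; prolongable on $a$ means $\mu(a)$ begins with $a$, and $\mu^{\omega}(a)$ is the infinite word having every $\mu^n(a)$ as a prefix. Aperiodic: no periodic suffix. Uniformly recurrent: for every $a$ there is $b$ such that every length-$a$ substring of $w$ occurs in every length-$b$ substring of $w$. The convention $\gcd(0,r^n)=r^n$ is used. *)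

theory Defs
  imports Complex_Main "HOL-Library.Sublist"
begin

text \<open>Infinite words are functions nat => 'a. The factor of w of length l
starting at index k, i.e. w_[k, k+l].\<close>
definition factor :: "(nat \<Rightarrow> 'a) \<Rightarrow> nat \<Rightarrow> nat \<Rightarrow> 'a list" where
  "factor w k l = map w [k..<k+l]"

definition is_factor :: "'a list \<Rightarrow> (nat \<Rightarrow> 'a) \<Rightarrow> bool" where
  "is_factor u w \<longleftrightarrow> (\<exists>k. u = factor w k (length u))"

definition morph_ext :: "('a \<Rightarrow> 'a list) \<Rightarrow> 'a list \<Rightarrow> 'a list" where
  "morph_ext \<mu> u = concat (map \<mu> u)"

definition morph_pow :: "('a \<Rightarrow> 'a list) \<Rightarrow> nat \<Rightarrow> 'a list \<Rightarrow> 'a list" where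
  "morph_pow \<mu> n = (morph_ext \<mu> ^^ n)"

definition uniform :: "nat \<Rightarrow> ('a \<Rightarrow> 'a list) \<Rightarrow> bool" where
  "uniform r \<mu> \<longleftrightarrow> (\<forall>b. length (\<mu> b) = r)"

definition prolongable :: "('a \<Rightarrow> 'a list) \<Rightarrow> 'a \<Rightarrow> bool" where
  "prolongable \<mu> a \<longleftrightarrow> \<mu> a \<noteq> [] \<and> hd (\<mu> a) = a"

definition is_fixpoint_word :: "('a \<Rightarrow> 'a list) \<Rightarrow> 'a \<Rightarrow> (nat \<Rightarrow> 'a) \<Rightarrow> bool" where
  "is_fixpoint_word \<mu> a w \<longleftrightarrow>
     (\<forall>n. factor w 0 (length (morph_pow \<mu> n [a])) = morph_pow \<mu> n [a])"

definition aperiodic :: "(nat \<Rightarrow> 'a) \<Rightarrow> bool" where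
  "aperiodic w \<longleftrightarrow> \<not> (\<exists>p N. p > 0 \<and> (\<forall>k\<ge>N. w (k + p) = w k))"

definition uniformly_recurrent :: "(nat \<Rightarrow> 'a) \<Rightarrow> bool" where
  "uniformly_recurrent w \<longleftrightarrow>
     (\<forall>a. \<exists>b. \<forall>j k. \<exists>l. k \<le> l \<and> l + a \<le> k + b \<and> factor w j a = factor w l a)"

end

theory Submission
  imports Defs
begin

lemma morph_pow_Suc: "morph_pow \<mu> (Suc n) u = morph_ext \<mu> (morph_pow \<mu> n u)"
  by (simp add: morph_pow_def)

lemma morph_pow_0: "morph_pow \<mu> 0 u = u"
  by (simp add: morph_pow_def)

lemma morph_pow_add: "morph_pow \<mu> (n + k) u = morph_pow \<mu> n (morph_pow \<mu> k u)"
  by (simp add: morph_pow_def funpow_add)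

lemma morph_ext_concat: "morph_ext \<mu> (concat (map g u)) = concat (map (\<lambda>x. morph_ext \<mu> (g x)) u)"
  by (induction u) (simp_all add: morph_ext_def)

lemma morph_pow_concat: "morph_pow \<mu> n u = concat (map (\<lambda>x. morph_pow \<mu> n [x]) u)"
proof (induction n arbitrary: u)
  case 0
  show ?case by (induction u) (simp_all add: morph_pow_0)
next
  case (Suc n)
  have "morph_pow \<mu> (Suc n) u = morph_ext \<mu> (concat (map (\<lambda>x. morph_pow \<mu> n [x]) u))"
    unfolding morph_pow_Suc by (subst Suc.IH[of u]) (rule refl)
  also have "\<dots> = concat (map (\<lambda>x. morph_pow \<mu> (Suc n) [x]) u)"
    by (simp add: morph_ext_concat morph_pow_Suc)
  finally show ?case .
qed

lemma length_morph_ext: "uniform r \<mu> \<Longrightarrow> length (morph_ext \<mu> u) = length u * r"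
  by (induction u) (simp_all add: morph_ext_def uniform_def)

lemma length_morph_pow: "uniform r \<mu> \<Longrightarrow> length (morph_pow \<mu> n u) = length u * r ^ n"
  by (induction n arbitrary: u) (simp_all add: morph_pow_0 morph_pow_Suc length_morph_ext)

lemma concat_nth_uniform:
  assumes "\<forall>x\<in>set u. length (g x) = N" "c < length u * N"
  shows "concat (map g u) ! c = g (u ! (c div N)) ! (c mod N)"
  using assms
proof (induction u arbitrary: c)
  case Nil
  then show ?case by simp
next
  case (Cons x u)
  have lx: "length (g x) = N" using Cons.prems by simp
  have NP: "N > 0" using Cons.prems(2) by (cases N) auto
  show ?case
  proof (cases "c < N")
    case True
    then show ?thesis using lx by (simp add: nth_append)
  next
    case False
    have "concat (map g (x # u)) ! c = concat (map g u) ! (c - N)"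
      using False lx by (simp add: nth_append)
    also have "\<dots> = g (u ! ((c - N) div N)) ! ((c - N) mod N)"
      using Cons.IH[of "c - N"] Cons.prems False by auto
    also have "\<dots> = g ((x # u) ! (c div N)) ! (c mod N)"
    proof -
      have d: "c div N = Suc ((c - N) div N)" using NP False by (intro le_div_geq) auto
      have m: "c mod N = (c - N) mod N" using False by (intro le_mod_geq) auto
      show ?thesis by (simp only: d m nth_Cons_Suc)
    qed
    finally show ?thesis .
  qed
qed

lemma factor_nth: "c < l \<Longrightarrow> factor w k l ! c = w (k + c)"
  by (simp add: factor_def)

lemma length_factor[simp]: "length (factor w k l) = l"
  by (simp add: factor_def)

lemma take_factor: "l \<le> l' \<Longrightarrow> take l (factor w s l') = factor w s l"
  by (rule nth_equalityI) (simp_all add: factor_nth)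

lemma drop_factor: "drop a (factor w s (a + l)) = factor w (s + a) l"
  by (rule nth_equalityI) (simp_all add: factor_nth add.assoc)

lemma MH:
  fixes w :: "nat \<Rightarrow> 'a" and d M :: nat and S :: "'a list set"
  assumes d: "d > 0" and fin: "finite S" and inS: "\<forall>l. factor w (l*d) (M*d) \<in> S"
    and cS: "card S < M"
  shows "\<exists>p N0. p > 0 \<and> (\<forall>k\<ge>N0. w (k + p) = w k)"
proof -
  define F where "F k = range (\<lambda>l. factor w (l*d) (k*d))" for k
  have Fimg: "F k = take (k*d) ` F k'" if "k \<le> k'" for k k'
  proof -
    have "take (k*d) (factor w (l*d) (k'*d)) = factor w (l*d) (k*d)" for l
      using that by (intro take_factor) simp
    then show ?thesis unfolding F_def by (simp add: image_image)
  qed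
  have FM: "F M \<subseteq> S" using inS unfolding F_def by auto
  have finM: "finite (F M)" using FM fin finite_subset by blast
  have cardM: "card (F M) \<le> card S" using FM fin card_mono by blast
  have fink: "finite (F k)" if "k \<le> M" for k
    using Fimg[OF that] finM by simp
  have mono: "card (F k) \<le> card (F (Suc k))" if "Suc k \<le> M" for k
  proof -
    have "F k = take (k*d) ` F (Suc k)" using Fimg[of k "Suc k"] by simp
    then show ?thesis using fink[OF that] by (simp add: card_image_le)
  qed
  have M1: "M \<ge> 1" using cS by simp
  have F1: "card (F 1) \<ge> 1"
  proof -
    have "F 1 \<noteq> {}" unfolding F_def by simp
    then show ?thesis using fink[of 1] M1 by (simp add: card_gt_0_iff Suc_le_eq)
  qed
  obtain k where k1: "1 \<le> k" and kM: "k < M" and keq: "card (F k) = card (F (Suc k))"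
  proof (rule ccontr)
    assume nt: "\<not> thesis"
    note obt = that
    have lt: "card (F k) < card (F (Suc k))" if "1 \<le> k" "k < M" for k
    proof -
      have "card (F k) \<noteq> card (F (Suc k))" using obt[of k] nt that by blast
      then show ?thesis using that mono[of k] by simp
    qed
    have "card (F k) \<ge> k" if "1 \<le> k" "k \<le> M" for k
      using that
    proof (induction k)
      case 0
      then show ?case by simp
    next
      case (Suc k)
      show ?case
      proof (cases "k = 0")
        case True
        then show ?thesis using F1 by simp
      next
        case False
        then have "k \<le> card (F k)" using Suc by simp
        moreover have "card (F k) < card (F (Suc k))" using lt[of k] Suc.prems False by simp
        ultimately show ?thesis by simp
      qed
    qed
    then have "card (F M) \<ge> M" using M1 by simp
    then show False using cardM cS by simp
  qed
  have inj: "inj_on (take (k*d)) (F (Suc k))"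
  proof -
    have "F k = take (k*d) ` F (Suc k)" using Fimg[of k "Suc k"] by simp
    then show ?thesis using keq fink[of "Suc k"] kM by (simp add: inj_on_iff_eq_card)
  qed
  define U where "U l = factor w (l*d) (k*d)" for l
  have step: "U (Suc a) = U (Suc b)" if "U a = U b" for a b
  proof -
    have A: "factor w (a*d) (Suc k * d) \<in> F (Suc k)" "factor w (b*d) (Suc k * d) \<in> F (Suc k)"
      unfolding F_def by auto
    have "take (k*d) (factor w (a*d) (Suc k * d)) = take (k*d) (factor w (b*d) (Suc k * d))"
      using that unfolding U_def by (simp add: take_factor)
    then have eq: "factor w (a*d) (Suc k * d) = factor w (b*d) (Suc k * d)"
      using inj A by (meson inj_onD)
    have "U (Suc a) = drop d (factor w (a*d) (d + k * d))"
      unfolding U_def by (simp add: drop_factor add.commute)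
    also have "\<dots> = drop d (factor w (b*d) (d + k * d))" using eq by (simp add: add.commute)
    also have "\<dots> = U (Suc b)"
      unfolding U_def by (simp add: drop_factor add.commute)
    finally show ?thesis .
  qed
  have allt: "U (a + t) = U (b + t)" if "U a = U b" for a b t
  proof (induction t)
    case 0
    then show ?case using that by simp
  next
    case (Suc t)
    then show ?case using step[OF Suc] by simp
  qed
  define c where "c = card (F k)"
  have "\<not> inj_on U {0..c}"
  proof
    assume "inj_on U {0..c}"
    moreover have "U ` {0..c} \<subseteq> F k" unfolding U_def F_def by auto
    ultimately have "card {0..c} \<le> card (F k)" using fink[of k] kM by (intro card_inj_on_le) auto
    then show False unfolding c_def by simp
  qed
  then obtain a b where ab: "a \<noteq> b" "U a = U b" unfolding inj_on_def by blast
  obtain a' b' where ab': "a' < b'" "U a' = U b'"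
  proof (cases "a < b")
    case True
    then show ?thesis using that ab by blast
  next
    case False
    then show ?thesis using that[of b a] ab by simp
  qed
  show ?thesis
  proof (intro exI conjI allI impI)
    show "(b' - a') * d > 0" using ab' d by simp
  next
    fix K assume K: "K \<ge> a' * d"
    define t where "t = (K - a'*d) div d"
    define e where "e = (K - a'*d) mod d"
    have Kx: "K = (a' + t) * d + e"
      using K unfolding t_def e_def by (simp add: algebra_simps)
    have ed: "e < d" unfolding e_def using d by simp
    have ekd: "e < k * d" using ed k1 by (metis less_le_trans mult_le_mono1 mult_1)
    have "U (a' + t) = U (b' + t)" using allt ab' by blast
    then have "U (a' + t) ! e = U (b' + t) ! e" by simp
    then have "w ((a' + t) * d + e) = w ((b' + t) * d + e)"
      unfolding U_def using ekd by (simp add: factor_nth)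
    moreover have "(b' + t) * d + e = K + (b' - a') * d"
    proof -
      have le: "a' * d \<le> b' * d" using ab' by simp
      have "(b' - a') * d = b'*d - a'*d" by (simp add: diff_mult_distrib)
      moreover have "(b'+t)*d = b'*d + t*d" by (simp add: algebra_simps)
      moreover have "K = a'*d + t*d + e" using Kx by (simp add: algebra_simps)
      ultimately show ?thesis using le by linarith
    qed
    ultimately show "w (K + (b' - a') * d) = w K" using Kx by simp
  qed
qed

theorem lemma8:
  fixes \<mu> :: "'a::finite \<Rightarrow> 'a list" and a f g :: 'a and w :: "nat \<Rightarrow> 'a"
    and r m n \<gamma> :: nat and t s :: "'a list"
  assumes "m = card (UNIV :: 'a set)"
    and "r \<ge> 2" and "uniform r \<mu>" and "prolongable \<mu> a"
    and "is_fixpoint_word \<mu> a w"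
    and "aperiodic w" and "uniformly_recurrent w"
    and "is_factor t w"
    and "\<forall>u. is_factor u w \<and> length u = 2 \<longrightarrow> sublist u t"
    and "s = f # t @ [g]" and "is_factor s w"
    and "morph_pow \<mu> n s = factor w \<gamma> (length s * r ^ n)"
  shows "real (gcd (\<gamma> mod r ^ n) (r ^ n)) > real (r ^ n) / real (m ^ 2)"
proof -
  define N where "N = r ^ n"
  define X where "X v = morph_pow \<mu> n [v]" for v
  have Npos: "N > 0" using assms(2) by (simp add: N_def)
  have lenX: "length (X v) = N" for v
    using assms(3) by (simp add: X_def N_def length_morph_pow)
  have mpc: "morph_pow \<mu> n u = concat (map X u)" for u
    unfolding X_def by (rule morph_pow_concat)
  have cnth: "concat (map X u) ! c = X (u ! (c div N)) ! (c mod N)" if "c < length u * N" for u c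
    using that lenX by (intro concat_nth_uniform) auto
  have fp: "w p = X (w (p div N)) ! (p mod N)" for p
  proof -
    define P where "P = morph_pow \<mu> p [a]"
    have lenP: "length P = r ^ p" using assms(3) by (simp add: P_def length_morph_pow)
    have "p < 2 ^ p" by (rule less_exp)
    also have "\<dots> \<le> r ^ p" using assms(2) by (simp add: power_mono)
    finally have pl: "p < r ^ p" .
    have Q: "morph_pow \<mu> (n + p) [a] = concat (map X P)"
      by (simp add: morph_pow_add mpc P_def)
    have lenQ: "length (morph_pow \<mu> (n + p) [a]) = r ^ p * N"
      by (simp add: length_morph_pow[OF assms(3)] N_def power_add mult.commute)
    have fw0: "factor w 0 (length (morph_pow \<mu> (n + p) [a])) = morph_pow \<mu> (n + p) [a]"
      using assms(5) unfolding is_fixpoint_word_def by blast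
    have fw: "factor w 0 (r ^ p * N) = concat (map X P)"
      using fw0 unfolding Q lenQ[unfolded Q] .
    have fw1: "factor w 0 (length (morph_pow \<mu> p [a])) = morph_pow \<mu> p [a]"
      using assms(5) unfolding is_fixpoint_word_def by blast
    have fw2: "factor w 0 (r ^ p) = P"
      using fw1 lenP unfolding P_def by simp
    have "r ^ p \<le> r ^ p * N" using Npos by simp
    then have pN: "p < r ^ p * N" using pl by linarith
    have "p div N \<le> p" by (rule div_le_dividend)
    then have pdN: "p div N < r ^ p" using pl by linarith
    have "w p = factor w 0 (r ^ p * N) ! p" using pN by (simp add: factor_nth)
    also have "\<dots> = X (P ! (p div N)) ! (p mod N)"
      using fw cnth[of p P] pN lenP by simp
    also have "P ! (p div N) = w (p div N)"
      using fw2[symmetric] pdN by (simp add: factor_nth)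
    finally show ?thesis .
  qed
  have fp2: "w (K*N + c) = X (w K) ! c" if "c < N" for K c
    using fp[of "K*N + c"] that Npos by simp
  have reg: "w (\<gamma> + h*N + c) = X (s ! h) ! c" if "h < length s" "c < N" for h c
  proof -
    have hc: "h*N + c < length s * N"
    proof -
      have "h*N + c < Suc h * N" using that by simp
      also have "\<dots> \<le> length s * N" using that by (intro mult_le_mono1) simp
      finally show ?thesis .
    qed
    have "w (\<gamma> + (h*N + c)) = factor w \<gamma> (length s * N) ! (h*N + c)"
      using hc by (simp add: factor_nth)
    also have "\<dots> = concat (map X s) ! (h*N + c)"
      using assms(12) unfolding mpc N_def by simp
    also have "\<dots> = X (s ! h) ! c" using cnth[OF hc] that by simp
    finally show ?thesis by (simp add: add.assoc)
  qed
  have shift: "\<exists>k'. \<forall>e<2*N. w (K*N + e) = w (\<gamma> + k'*N + e)" for K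
  proof -
    have f2: "factor w K (length [w K, w (Suc K)]) = [w K, w (Suc K)]"
      by (simp add: factor_def)
    have "is_factor [w K, w (Suc K)] w"
      unfolding is_factor_def using f2 by metis
    moreover have "length [w K, w (Suc K)] = 2" by simp
    ultimately have "sublist [w K, w (Suc K)] t" using assms(9) by blast
    then obtain ps ss where tdec: "t = ps @ [w K, w (Suc K)] @ ss" unfolding sublist_def by blast
    define k where "k = length ps"
    have s1: "s ! Suc k = w K" using assms(10) tdec by (simp add: k_def nth_append)
    have s2: "s ! Suc (Suc k) = w (Suc K)" using assms(10) tdec by (simp add: k_def nth_append)
    have ls: "Suc (Suc k) < length s" using assms(10) tdec by (simp add: k_def)
    show ?thesis
    proof (intro exI allI impI)
      fix e assume e: "e < 2*N"
      show "w (K*N + e) = w (\<gamma> + Suc k * N + e)"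
      proof (cases "e < N")
        case True
        then show ?thesis using fp2[OF True, of K] reg[of "Suc k" e] s1 ls by simp
      next
        case False
        define e' where "e' = e - N"
        have e': "e' < N" using e False by (simp add: e'_def)
        have "w (K*N + e) = w (Suc K * N + e')" using False by (simp add: e'_def)
        also have "\<dots> = X (w (Suc K)) ! e'" by (rule fp2[OF e'])
        also have "\<dots> = w (\<gamma> + Suc (Suc k) * N + e')" using reg[OF ls e'] s2 by simp
        also have "\<dots> = w (\<gamma> + Suc k * N + e)" using False by (simp add: e'_def add.assoc)
        finally show ?thesis .
      qed
    qed
  qed
  define i where "i = \<gamma> mod N"
  define q where "q = \<gamma> div N"
  have gq: "\<gamma> = q*N + i" by (simp add: i_def q_def)
  have iN: "i < N" using Npos by (simp add: i_def)
  define Good where "Good ofs \<longleftrightarrow> (\<forall>K. \<exists>v. \<forall>c<N. w (K*N + ofs + c) = X v ! c)" for ofs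
  have G0: "Good 0" unfolding Good_def using fp2 by auto
  have Gstep: "Good ((ofs + (N - i)) mod N)" if oN: "ofs < N" and Go: "Good ofs" for ofs
    unfolding Good_def
  proof
    fix K
    obtain k' where k': "\<forall>e<2*N. w (K*N + e) = w (\<gamma> + k'*N + e)" using shift by blast
    show "\<exists>v. \<forall>c<N. w (K*N + (ofs + (N - i)) mod N + c) = X v ! c"
    proof (cases "ofs < i")
      case True
      have om: "(ofs + (N - i)) mod N = ofs + (N - i)" using True iN by simp
      obtain v where v: "\<forall>c<N. w ((q + k' + 1)*N + ofs + c) = X v ! c" using Go unfolding Good_def by blast
      show ?thesis
      proof (intro exI allI impI)
        fix c assume c: "c < N"
        have "w (K*N + (ofs + (N - i)) mod N + c) = w (K*N + (ofs + (N - i) + c))" by (simp add: om add.assoc)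
        also have "\<dots> = w (\<gamma> + k'*N + (ofs + (N - i) + c))" proof -
          have "ofs + (N - i) + c < 2*N" using c True iN by simp
          then show ?thesis using k' by blast
        qed
        also have "\<gamma> + k'*N + (ofs + (N - i) + c) = (q + k' + 1)*N + ofs + c"
          using gq True iN by (simp add: algebra_simps)
        also have "w \<dots> = X v ! c" using v c by blast
        finally show "w (K*N + (ofs + (N - i)) mod N + c) = X v ! c" .
      qed
    next
      case False
      have om: "(ofs + (N - i)) mod N = ofs - i"
      proof -
        have e1: "ofs + (N - i) = (ofs - i) + N" using False iN by simp
        have "((ofs - i) + N) mod N = ofs - i" using oN by simp
        then show ?thesis by (simp only: e1)
      qed
      obtain v where v: "\<forall>c<N. w ((q + k')*N + ofs + c) = X v ! c" using Go unfolding Good_def by blast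
      show ?thesis
      proof (intro exI allI impI)
        fix c assume c: "c < N"
        have "w (K*N + (ofs + (N - i)) mod N + c) = w (K*N + (ofs - i + c))" by (simp add: om add.assoc)
        also have "\<dots> = w (\<gamma> + k'*N + (ofs - i + c))" proof -
          have "ofs - i + c < 2*N" using c oN by simp
          then show ?thesis using k' by blast
        qed
        also have "\<gamma> + k'*N + (ofs - i + c) = (q + k')*N + ofs + c"
          using gq False by (simp add: algebra_simps)
        also have "w \<dots> = X v ! c" using v c by blast
        finally show "w (K*N + (ofs + (N - i)) mod N + c) = X v ! c" .
      qed
    qed
  qed
  have Gall: "Good ((l * (N - i)) mod N)" for l
  proof (induction l)
    case 0
    then show ?case using G0 by simp
  next
    case (Suc l)
    have "Good (((l * (N - i)) mod N + (N - i)) mod N)"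
      using Gstep[OF _ Suc] Npos by simp
    moreover have "((l * (N - i)) mod N + (N - i)) mod N = (Suc l * (N - i)) mod N"
    proof -
      have "((l * (N - i)) mod N + (N - i)) mod N = (l * (N - i) + (N - i)) mod N"
        by (rule mod_add_left_eq)
      also have "l * (N - i) + (N - i) = Suc l * (N - i)" by simp
      finally show ?thesis .
    qed
    ultimately show ?case by simp
  qed
  define d where "d = gcd i N"
  have dpos: "d > 0" using Npos by (simp add: d_def)
  have dN: "d dvd N" by (simp add: d_def)
  have deq: "gcd (N - i) N = d" using iN by (simp add: d_def gcd_diff2_nat)
  have Gd: "Good ofs" if dof: "d dvd ofs" and ofN: "ofs < N" for ofs
  proof -
    obtain x y where xy: "(N - i) * x = N * y + d" using bezout_nat[of "N - i" N] iN deq by auto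
    obtain c where oc: "ofs = d * c" using dof by blast
    have "(x * c) * (N - i) = N * (y * c) + ofs" using xy oc
      by (metis add_mult_distrib mult.assoc mult.commute)
    then have "((x * c) * (N - i)) mod N = ofs" using ofN by simp
    then show ?thesis using Gall[of "x * c"] by simp
  qed
  have blocks: "factor w P N \<in> range X" if "d dvd P" for P
  proof -
    have "d dvd P mod N" using that dN by (simp add: dvd_mod)
    then have "Good (P mod N)" using Gd Npos by simp
    then obtain v where v: "\<forall>c<N. w ((P div N)*N + P mod N + c) = X v ! c" unfolding Good_def by blast
    have "factor w P N = X v"
    proof (rule nth_equalityI)
      show "length (factor w P N) = length (X v)" by (simp add: lenX)
    next
      fix c assume "c < length (factor w P N)"
      then have c: "c < N" by simp
      have "factor w P N ! c = w (P + c)" using c by (simp add: factor_nth)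
      also have "\<dots> = X v ! c" using v c by simp
      finally show "factor w P N ! c = X v ! c" .
    qed
    then show ?thesis by simp
  qed
  have m2: "m \<ge> 2"
  proof (rule ccontr)
    assume "\<not> m \<ge> 2"
    then have "card (UNIV :: 'a set) \<le> Suc 0" using assms(1) by simp
    then have all: "\<forall>x y :: 'a. x = y" using card_le_Suc0_iff_eq[of "UNIV :: 'a set"] by simp
    have "\<exists>p N0. p > 0 \<and> (\<forall>k\<ge>N0. w (k + p) = w k)"
      using all by (intro exI[of _ 1] exI[of _ 0]) auto
    then show False using assms(6) unfolding aperiodic_def by blast
  qed
  have goal: "N < d * m^2"
  proof (rule ccontr)
    assume "\<not> N < d * m^2"
    then have le: "d * m^2 \<le> N" by simp
    define M where "M = N div d"
    have MdN: "M * d = N" using dN by (simp add: M_def)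
    have mM: "m^2 \<le> M"
    proof -
      have "d * m^2 \<le> d * M" using le MdN by (simp add: mult.commute)
      then show ?thesis using dpos by simp
    qed
    have cardS: "card (range X) \<le> m" using assms(1) card_image_le[of UNIV X] by simp
    have "m < m^2" using m2 by (simp add: power2_eq_square)
    then have cS: "card (range X) < M" using cardS mM by linarith
    have inS: "\<forall>l. factor w (l*d) (M*d) \<in> range X" using blocks MdN by simp
    have "\<exists>p N0. p > 0 \<and> (\<forall>k\<ge>N0. w (k + p) = w k)"
      using MH[OF dpos _ inS cS] by simp
    then show False using assms(6) unfolding aperiodic_def by blast
  qed
  have "real N < real d * real (m^2)" using goal by (metis of_nat_less_iff of_nat_mult)
  moreover have "real (m^2) > 0" using m2 by simp
  ultimately have "real N / real (m^2) < real d" by (simp add: divide_less_eq)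
  then show ?thesis by (simp add: N_def d_def i_def)
qed

end
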